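(* Let $\mathcal{K}=(\mathcal{R},\mathcal{T})$ be an ME-consistent $\mathcal{ALCP}$ knowledge base over $\mathcal{L}$, $C,D$ concepts and $\kappa\in\mathcal{L}$ a context. There exist two ME-$\mathcal{ALCP}$-models $\mathcal{P},\mathcal{Q}$ of $\mathcal{K}$ with $\mathcal{B}^{s}_{\mathcal{K}}(C\sqsubseteq D\mid\kappa)=\Pr_{\mathcal{P}}(C\sqsubseteq D\mid\kappa)$ and $\mathcal{B}^{c}_{\mathcal{K}}(C\sqsubseteq D\mid\kappa)=\Pr_{\mathcal{Q}}(C\sqsubseteq D\mid\kappa)$.
   Context: $\mathcal{L}$ is a propositional language over a finite set of variables; $\mathrm{Int}(\mathcal{L})$ is the set of truth assignments. A probability distribution over $\mathcal{L}$ is $P:\mathrm{Int}(\mathcal{L})\to[0,1]$ summing to $1$, with $P(\phi)=\sum_{v\models\phi}P(v)$. A probabilistic constraint is $c_0+\sum_{i=1}^k c_i\,\mathsf{p}(\phi_i)\ge 0$ ($c_i\in\mathbb{R}$, $\phi_i\in\mathcal{L}$), satisfied by $P$ iff $c_0+\sum_ic_iP(\phi_i)\ge0$; $\mathrm{Mod}(\mathcal{R})$ is the set of distributions satisfying all constraints in $\mathcal{R}$; for consistent $\mathcal{R}$, $P^{ME}_{\mathcal{R}}$ is the unique maximizer in $\mathrm{Mod}(\mathcal{R})$ of $H(P)=-\sum_vP(v)\log P(v)$. Concepts: $C::=A\mid\neg C\mid C\sqcap C\mid\exists r.C$. An $\mathcal{L}$-GCI is $\langle C\sqsubseteq D:\kappa\rangle$,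 $\kappa\in\mathcal{L}$; an $\mathcal{L}$-TBox is a finite set of them; a KB is $\mathcal{K}=(\mathcal{R},\mathcal{T})$. A possible world $\mathcal{I}=(\Delta^{\mathcal{I}},\cdot^{\mathcal{I}},v^{\mathcal{I}})$ is a classical $\mathcal{ALC}$ interpretation together with $v^{\mathcal{I}}\in\mathrm{Int}(\mathcal{L})$; it models $\langle C\sqsubseteq D:\kappa\rangle$ iff $v^{\mathcal{I}}\not\models\kappa$ or $C^{\mathcal{I}}\subseteq D^{\mathcal{I}}$. An $\mathcal{ALCP}$-interpretation $\mathcal{P}=(\mathfrak{I},P_{\mathfrak{I}})$ is a nonempty finite set of possible worlds with a probability distribution on it; $P^{\mathcal{P}}(v)=\sum_{\mathcal{I}\in\mathfrak{I},v^{\mathcal{I}}=v}P_{\mathfrak{I}}(\mathcal{I})$. $\mathcal{P}$ is an ME-$\mathcal{ALCP}$-model of $\mathcal{K}$ iff all its worlds model every GCI of $\mathcal{T}$ and $P^{\mathcal{P}}=P^{ME}_{\mathcal{R}}$; $\mathrm{Mod}_{ME}(\mathcal{K})$ is the set of these; $\mathcal{K}$ is ME-consistent iff it is nonempty. $\Pr_{\mathcal{P}}(C\sqsubseteq D\mid\kappa)=\big(\sum_{\mathcal{I}\in\mathfrak{I},v^{\mathcal{I}}\models\kappa,C^{\mathcal{I}}\subseteq D^{\mathcal{I}}}P_{\mathfrak{I}}(\mathcal{I})\big)/\big(\sum_{\mathcal{I}\in\mathfrak{I},v^{\mathcal{I}}\models\kappa}P_{\mathfrak{I}}(\mathcal{I})\big)$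 (defined when the denominator is positive). Sceptical degree: $\mathcal{B}^{s}_{\mathcal{K}}(C\sqsubseteq D\mid\kappa)=\inf_{\mathcal{P}\in\mathrm{Mod}_{ME}(\mathcal{K})}\Pr_{\mathcal{P}}(C\sqsubseteq D\mid\kappa)$; credulous degree $\mathcal{B}^{c}_{\mathcal{K}}$: the corresponding supremum. *)

theory Defs
  imports Complex_Main
begin

datatype 'v form = PVar 'v | PNot "'v form" | PAnd "'v form" "'v form" | POr "'v form" "'v form"

type_synonym 'v assignment = "'v \<Rightarrow> bool"

fun holds :: "'v assignment \<Rightarrow> 'v form \<Rightarrow> bool" where
  "holds v (PVar x) = v x"
| "holds v (PNot f) = (\<not> holds v f)"
| "holds v (PAnd f g) = (holds v f \<and> holds v g)"
| "holds v (POr f g) = (holds v f \<or> holds v g)"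

definition is_dist :: "('v::finite assignment \<Rightarrow> real) \<Rightarrow> bool" where
  "is_dist P \<longleftrightarrow> (\<forall>v. P v \<ge> 0) \<and> (\<Sum>v\<in>UNIV. P v) = 1"

definition probF :: "('v::finite assignment \<Rightarrow> real) \<Rightarrow> 'v form \<Rightarrow> real" where
  "probF P \<phi> = (\<Sum>v\<in>{v. holds v \<phi>}. P v)"

text \<open>A probabilistic constraint c0 + sum_i c_i p(phi_i) >= 0 is a pair (c0, [(c_1,phi_1),...]).\<close>

type_synonym 'v constraint = "real \<times> (real \<times> 'v form) list"

definition sat_constraint :: "('v::finite assignment \<Rightarrow> real) \<Rightarrow> 'v constraint \<Rightarrow> bool" where
  "sat_constraint P c \<longleftrightarrow> fst c + (\<Sum>(ci, \<phi>)\<leftarrow>snd c. ci * probF P \<phi>) \<ge> 0"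

definition ModR :: "'v::finite constraint set \<Rightarrow> ('v assignment \<Rightarrow> real) set" where
  "ModR R = {P. is_dist P \<and> (\<forall>c\<in>R. sat_constraint P c)}"

definition entropy :: "('v::finite assignment \<Rightarrow> real) \<Rightarrow> real" where
  "entropy P = - (\<Sum>v\<in>UNIV. if P v = 0 then 0 else P v * ln (P v))"

text \<open>The ME distribution: the (unique, for consistent R) entropy maximizer in Mod(R).\<close>

definition ME_dist :: "'v::finite constraint set \<Rightarrow> ('v assignment \<Rightarrow> real)" where
  "ME_dist R = (THE P. P \<in> ModR R \<and> (\<forall>Q\<in>ModR R. entropy Q \<le> entropy P))"

datatype ('c, 'r) concept =
    CAtom 'c
  | CNeg "('c, 'r) concept"
  | CAnd "('c, 'r) concept" "('c, 'r) concept"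
  | CEx 'r "('c, 'r) concept"

text \<open>L-GCI <C \<sqsubseteq> D : kappa> as a triple (C, D, kappa).\<close>

type_synonym ('c, 'r, 'v) gci = "('c, 'r) concept \<times> ('c, 'r) concept \<times> 'v form"

record ('c, 'r, 'd, 'v) world =
  dom :: "'d set"
  cint :: "'c \<Rightarrow> 'd set"
  rint :: "'r \<Rightarrow> ('d \<times> 'd) set"
  val :: "'v assignment"

definition wf_world :: "('c, 'r, 'd, 'v) world \<Rightarrow> bool" where
  "wf_world I \<longleftrightarrow> dom I \<noteq> {} \<and> (\<forall>A. cint I A \<subseteq> dom I) \<and> (\<forall>r. rint I r \<subseteq> dom I \<times> dom I)"

fun ext :: "('c, 'r, 'd, 'v) world \<Rightarrow> ('c, 'r) concept \<Rightarrow> 'd set" where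
  "ext I (CAtom A) = cint I A"
| "ext I (CNeg C) = dom I - ext I C"
| "ext I (CAnd C D) = ext I C \<inter> ext I D"
| "ext I (CEx r C) = {x \<in> dom I. \<exists>y. (x, y) \<in> rint I r \<and> y \<in> ext I C}"

definition world_models_gci :: "('c, 'r, 'd, 'v) world \<Rightarrow> ('c, 'r, 'v) gci \<Rightarrow> bool" where
  "world_models_gci I g = (case g of (C, D, \<kappa>) \<Rightarrow> \<not> holds (val I) \<kappa> \<or> ext I C \<subseteq> ext I D)"

type_synonym ('c, 'r, 'd, 'v) alcp = "('c, 'r, 'd, 'v) world set \<times> (('c, 'r, 'd, 'v) world \<Rightarrow> real)"

definition is_ALCP :: "('c, 'r, 'd, 'v) alcp \<Rightarrow> bool" where
  "is_ALCP M = (case M of (W, PW) \<Rightarrow>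
     finite W \<and> W \<noteq> {} \<and> (\<forall>I\<in>W. wf_world I) \<and> (\<forall>I\<in>W. PW I \<ge> 0) \<and> (\<Sum>I\<in>W. PW I) = 1)"

definition marginal :: "('c, 'r, 'd, 'v) alcp \<Rightarrow> 'v assignment \<Rightarrow> real" where
  "marginal M v = (case M of (W, PW) \<Rightarrow> \<Sum>I\<in>{I\<in>W. val I = v}. PW I)"

definition ME_models :: "'v::finite constraint set \<Rightarrow> ('c, 'r, 'v) gci set \<Rightarrow> ('c, 'r, 'd, 'v) alcp set" where
  "ME_models R T = {M. is_ALCP M \<and> (\<forall>I\<in>fst M. \<forall>g\<in>T. world_models_gci I g) \<and> marginal M = ME_dist R}"

definition ME_consistent :: "'v::finite constraint set \<Rightarrow> ('c, 'r, 'v) gci set \<Rightarrow> 'd itself \<Rightarrow> bool" where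
  "ME_consistent R T (_ :: 'd itself) \<longleftrightarrow> (ME_models R T :: ('c, 'r, 'd, 'v) alcp set) \<noteq> {}"

definition Pr :: "('c, 'r, 'd, 'v) alcp \<Rightarrow> ('c, 'r) concept \<Rightarrow> ('c, 'r) concept \<Rightarrow> 'v form \<Rightarrow> real" where
  "Pr M C D \<kappa> = (case M of (W, PW) \<Rightarrow>
     (\<Sum>I\<in>{I\<in>W. holds (val I) \<kappa> \<and> ext I C \<subseteq> ext I D}. PW I) / (\<Sum>I\<in>{I\<in>W. holds (val I) \<kappa>}. PW I))"

definition sceptical :: "'v::finite constraint set \<Rightarrow> ('c, 'r, 'v) gci set \<Rightarrow> 'd itself \<Rightarrow>
    ('c, 'r) concept \<Rightarrow> ('c, 'r) concept \<Rightarrow> 'v form \<Rightarrow> real" where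
  "sceptical R T (_ :: 'd itself) C D \<kappa> = (INF M\<in>(ME_models R T :: ('c, 'r, 'd, 'v) alcp set). Pr M C D \<kappa>)"

definition credulous :: "'v::finite constraint set \<Rightarrow> ('c, 'r, 'v) gci set \<Rightarrow> 'd itself \<Rightarrow>
    ('c, 'r) concept \<Rightarrow> ('c, 'r) concept \<Rightarrow> 'v form \<Rightarrow> real" where
  "credulous R T (_ :: 'd itself) C D \<kappa> = (SUP M\<in>(ME_models R T :: ('c, 'r, 'd, 'v) alcp set). Pr M C D \<kappa>)"

end

theory Submission
  imports Defs
begin

definition pick :: "('c,'r,'d,'v) world set \<Rightarrow> ('c,'r) concept \<Rightarrow> ('c,'r) concept \<Rightarrow> bool \<Rightarrow> ('c,'r,'d,'v) world" where
  "pick S C D b = (if \<exists>I\<in>S. (ext I C \<subseteq> ext I D) = b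
      then SOME I. I \<in> S \<and> (ext I C \<subseteq> ext I D) = b else SOME I. I \<in> S)"

lemma pick_in: "S \<noteq> {} \<Longrightarrow> pick S C D b \<in> S"
proof (cases "\<exists>I\<in>S. (ext I C \<subseteq> ext I D) = b")
  case True
  hence ex: "\<exists>I. I \<in> S \<and> (ext I C \<subseteq> ext I D) = b" by blast
  show ?thesis using True someI_ex[OF ex] unfolding pick_def by simp
next
  case False
  assume "S \<noteq> {}"
  hence ex: "\<exists>I. I \<in> S" by blast
  show ?thesis using False someI_ex[OF ex] unfolding pick_def by simp
qed

lemma pick_good: "I \<in> S \<Longrightarrow> (ext I C \<subseteq> ext I D) = b \<Longrightarrow>
   (ext (pick S C D b) C \<subseteq> ext (pick S C D b) D) = b"
proof -
  assume a: "I \<in> S" "(ext I C \<subseteq> ext I D) = b"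
  hence ex: "\<exists>I. I \<in> S \<and> (ext I C \<subseteq> ext I D) = b" by blast
  hence "pick S C D b = (SOME I. I \<in> S \<and> (ext I C \<subseteq> ext I D) = b)"
    unfolding pick_def by auto
  then show ?thesis using someI_ex[OF ex] by simp
qed

lemma sum_group_val:
  fixes W :: "('c,'r,'d,'v::finite) world set"
  assumes "finite W"
  shows "(\<Sum>I\<in>{I\<in>W. Q I}. p I) = (\<Sum>v\<in>UNIV. \<Sum>I\<in>{I\<in>W. Q I \<and> val I = v}. p I)"
proof -
  have "(\<Sum>v\<in>UNIV. sum p {x \<in> {I\<in>W. Q I}. val x = v}) = sum p {I\<in>W. Q I}"
    by (rule sum.group) (use assms in auto)
  moreover have "\<And>v. {x \<in> {I\<in>W. Q I}. val x = v} = {I\<in>W. Q I \<and> val I = v}" by auto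
  ultimately show ?thesis by simp
qed

lemma model_props:
  fixes W :: "('c,'r,'d,'v::finite) world set"
  assumes "(W,p) \<in> ME_models R T"
  shows "finite W" "\<forall>I\<in>W. p I \<ge> 0" "\<forall>I\<in>W. wf_world I \<and> (\<forall>g\<in>T. world_models_gci I g)"
    "\<And>v. ME_dist R v = (\<Sum>I\<in>{I\<in>W. val I = v}. p I)" "(\<Sum>I\<in>W. p I) = 1"
proof -
  have a: "is_ALCP (W,p)" "\<forall>I\<in>W. \<forall>g\<in>T. world_models_gci I g" "marginal (W,p) = ME_dist R"
    using assms unfolding ME_models_def by auto
  from a(1) show "finite W" "\<forall>I\<in>W. p I \<ge> 0" "(\<Sum>I\<in>W. p I) = 1"
    unfolding is_ALCP_def by auto
  from a(1,2) show "\<forall>I\<in>W. wf_world I \<and> (\<forall>g\<in>T. world_models_gci I g)"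
    unfolding is_ALCP_def by auto
  fix v
  from a(3) have "marginal (W,p) v = ME_dist R v" by simp
  then show "ME_dist R v = (\<Sum>I\<in>{I\<in>W. val I = v}. p I)" unfolding marginal_def by simp
qed

lemma model_dist:
  fixes W :: "('c,'r,'d,'v::finite) world set"
  assumes "(W,p) \<in> ME_models R T"
  shows "ME_dist R v \<ge> 0" "(\<Sum>v\<in>UNIV. ME_dist R v) = 1"
proof -
  note mp = model_props[OF assms]
  show "ME_dist R v \<ge> 0" unfolding mp(4) using mp(2) by (auto intro: sum_nonneg)
  have "(\<Sum>v\<in>UNIV. ME_dist R v) = (\<Sum>I\<in>{I\<in>W. True}. p I)"
    unfolding mp(4) using sum_group_val[OF mp(1), where Q="\<lambda>_. True" and p=p] by simp
  then show "(\<Sum>v\<in>UNIV. ME_dist R v) = 1" using mp(5) by simp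
qed

lemma model_den:
  fixes W :: "('c,'r,'d,'v::finite) world set"
  assumes "(W,p) \<in> ME_models R T"
  shows "(\<Sum>I\<in>{I\<in>W. holds (val I) \<kappa>}. p I) = (\<Sum>v\<in>UNIV. if holds v \<kappa> then ME_dist R v else 0)"
proof -
  note mp = model_props[OF assms]
  show ?thesis unfolding sum_group_val[OF mp(1), where Q="\<lambda>I. holds (val I) \<kappa>"]
  proof (rule sum.cong)
    fix v show "(\<Sum>I\<in>{I\<in>W. holds (val I) \<kappa> \<and> val I = v}. p I) = (if holds v \<kappa> then ME_dist R v else 0)"
    proof (cases "holds v \<kappa>")
      case True
      hence "{I\<in>W. holds (val I) \<kappa> \<and> val I = v} = {I\<in>W. val I = v}" by auto
      then show ?thesis using True mp(4)[of v] by simp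
    next
      case False
      hence "{I\<in>W. holds (val I) \<kappa> \<and> val I = v} = {}" by auto
      then show ?thesis using False by (simp only: sum.empty if_False)
    qed
  qed simp
qed

lemma extreme:
  fixes R :: "'v::finite constraint set" and T :: "('c,'r,'v) gci set"
    and C D :: "('c,'r) concept" and \<kappa> :: "'v form"
    and M0 M :: "('c,'r,'d,'v) alcp"
  assumes M0: "M0 \<in> ME_models R T"
  defines "cd \<equiv> \<lambda>v. {I::('c,'r,'d,'v) world. wf_world I \<and> (\<forall>g\<in>T. world_models_gci I g) \<and> val I = v}"
  defines "Mb \<equiv> \<lambda>b. ((\<lambda>v. pick (cd v) C D b) ` {v. ME_dist R v > 0}, \<lambda>I::('c,'r,'d,'v) world. ME_dist R (val I))"
  shows "Mb b \<in> ME_models R T"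
    and "M \<in> ME_models R T \<Longrightarrow> Pr (Mb False) C D \<kappa> \<le> Pr M C D \<kappa>"
    and "M \<in> ME_models R T \<Longrightarrow> Pr M C D \<kappa> \<le> Pr (Mb True) C D \<kappa>"
proof -
  obtain W0 p0 where M0e: "M0 = (W0, p0)" by (cases M0)
  define P where "P = ME_dist R"
  define Sp where "Sp = {v. P v > 0}"
  have P0: "\<And>v. P v \<ge> 0" and Psum: "(\<Sum>v\<in>UNIV. P v) = 1"
    using model_dist[of W0 p0 R T] M0 M0e unfolding P_def by auto
  note mp0 = model_props[of W0 p0 R T, OF M0[unfolded M0e]]
  have cdne: "cd v \<noteq> {}" if "v \<in> Sp" for v
  proof -
    have "0 < (\<Sum>I\<in>{I\<in>W0. val I = v}. p0 I)" using that mp0(4)[of v] unfolding Sp_def P_def by simp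
    then obtain I where "I \<in> W0" "val I = v" by (metis (mono_tags, lifting) empty_Collect_eq less_irrefl sum.empty)
    then have "I \<in> cd v" using mp0(3) unfolding cd_def by auto
    then show ?thesis by blast
  qed
  define pk where "pk = (\<lambda>b v. pick (cd v) C D b)"
  have pkin: "\<And>b v. v \<in> Sp \<Longrightarrow> pk b v \<in> cd v" unfolding pk_def using cdne pick_in by blast
  have valpk: "\<And>b v. v \<in> Sp \<Longrightarrow> val (pk b v) = v" using pkin unfolding cd_def by blast
  have inj: "\<And>b. inj_on (pk b) Sp" by (rule inj_onI) (metis valpk)
  have finSp: "finite Sp" by simp
  have Mbe: "\<And>b. Mb b = (pk b ` Sp, \<lambda>I. P (val I))" unfolding Mb_def pk_def Sp_def P_def by simp
  have margb: "(\<Sum>I\<in>{I\<in>pk b ` Sp. val I = v}. P (val I)) = P v" for b v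
  proof (cases "v \<in> Sp")
    case True
    have "{I\<in>pk b ` Sp. val I = v} = {pk b v}" using True valpk by auto
    then show ?thesis using True valpk by simp
  next
    case False
    have "{I\<in>pk b ` Sp. val I = v} = {}" using False valpk by auto
    moreover have "P v = 0" using False P0[of v] unfolding Sp_def by simp
    ultimately show ?thesis by simp
  qed
  have sumb: "(\<Sum>I\<in>pk b ` Sp. P (val I)) = 1" for b
  proof -
    have "(\<Sum>I\<in>pk b ` Sp. P (val I)) = (\<Sum>v\<in>Sp. P (val (pk b v)))"
      by (rule sum.reindex[OF inj, unfolded comp_def])
    also have "\<dots> = (\<Sum>v\<in>Sp. P v)" using valpk by simp
    also have "\<dots> = (\<Sum>v\<in>UNIV. P v)"
      by (rule sum.mono_neutral_left) (use P0 in \<open>auto simp: Sp_def intro: antisym\<close>)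
    finally show ?thesis using Psum by simp
  qed
  show modb: "Mb b \<in> ME_models R T" for b
  proof -
    have "pk b ` Sp \<noteq> {}" using sumb[of b] by auto
    moreover have "\<forall>I\<in>pk b ` Sp. wf_world I \<and> (\<forall>g\<in>T. world_models_gci I g)"
      using pkin unfolding cd_def by blast
    moreover have "\<forall>I\<in>pk b ` Sp. P (val I) \<ge> 0" using P0 by simp
    moreover have "marginal (Mb b) = ME_dist R"
      unfolding Mbe marginal_def using margb P_def by auto
    ultimately show ?thesis unfolding ME_models_def is_ALCP_def Mbe using sumb[of b] finSp by auto
  qed
  define good where "good = (\<lambda>I::('c,'r,'d,'v) world. ext I C \<subseteq> ext I D)"
  define Den where "Den = (\<Sum>v\<in>UNIV. if holds v \<kappa> then P v else 0)"
  have Den0: "Den \<ge> 0" unfolding Den_def using P0 by (auto intro: sum_nonneg)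
  define f where "f = (\<lambda>b v. if v \<in> Sp \<and> holds v \<kappa> \<and> good (pk b v) then P v else 0)"
  have PrMb: "Pr (Mb b) C D \<kappa> = (\<Sum>v\<in>UNIV. f b v) / Den" for b
  proof -
    have den: "(\<Sum>I\<in>{I\<in>pk b ` Sp. holds (val I) \<kappa>}. P (val I)) = Den"
      using model_den[of "pk b ` Sp" "\<lambda>I. P (val I)" R T \<kappa>] modb[of b] unfolding Mbe Den_def P_def by simp
    have "(\<Sum>I\<in>{I\<in>pk b ` Sp. holds (val I) \<kappa> \<and> good I}. P (val I))
       = (\<Sum>v\<in>UNIV. \<Sum>I\<in>{I\<in>pk b ` Sp. (holds (val I) \<kappa> \<and> good I) \<and> val I = v}. P (val I))"
      by (rule sum_group_val) simp
    also have "\<dots> = (\<Sum>v\<in>UNIV. f b v)"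
    proof (rule sum.cong)
      fix v
      show "(\<Sum>I\<in>{I\<in>pk b ` Sp. (holds (val I) \<kappa> \<and> good I) \<and> val I = v}. P (val I)) = f b v"
      proof (cases "v \<in> Sp \<and> holds v \<kappa> \<and> good (pk b v)")
        case True
        have "{I\<in>pk b ` Sp. (holds (val I) \<kappa> \<and> good I) \<and> val I = v} = {pk b v}"
          using True valpk by auto
        then show ?thesis using True valpk unfolding f_def by simp
      next
        case False
        have "{I\<in>pk b ` Sp. (holds (val I) \<kappa> \<and> good I) \<and> val I = v} = {}"
          using False valpk by auto
        moreover have "f b v = 0" unfolding f_def using False by auto
        ultimately show ?thesis by (simp only: sum.empty)
      qed
    qed simp
    finally show ?thesis unfolding Pr_def Mbe using den good_def by simp
  qed
  have PrM: "Pr M C D \<kappa> = (\<Sum>v\<in>UNIV. \<Sum>I\<in>{I\<in>W. (holds (val I) \<kappa> \<and> good I) \<and> val I = v}. p I) / Den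
     \<and> finite W \<and> (\<forall>I\<in>W. p I \<ge> 0) \<and> (\<forall>I\<in>W. I \<in> cd (val I)) \<and> (\<forall>v. P v = (\<Sum>I\<in>{I\<in>W. val I = v}. p I))"
    if "M = (W, p)" "M \<in> ME_models R T" for M W p
  proof -
    note mp = model_props[of W p R T, OF that(2)[unfolded that(1)]]
    have den: "(\<Sum>I\<in>{I\<in>W. holds (val I) \<kappa>}. p I) = Den"
      using model_den[of W p R T \<kappa>] that unfolding Den_def P_def by simp
    have "(\<Sum>I\<in>{I\<in>W. holds (val I) \<kappa> \<and> good I}. p I)
       = (\<Sum>v\<in>UNIV. \<Sum>I\<in>{I\<in>W. (holds (val I) \<kappa> \<and> good I) \<and> val I = v}. p I)"
      by (rule sum_group_val) (rule mp(1))
    then show ?thesis using den mp unfolding Pr_def that(1) good_def cd_def P_def by auto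
  qed
  show "Pr (Mb False) C D \<kappa> \<le> Pr M C D \<kappa>" if "M \<in> ME_models R T"
  proof -
    obtain W p where Me: "M = (W, p)" by (cases M)
    note pm = PrM[OF Me that]
    have "(\<Sum>v\<in>UNIV. f False v) \<le> (\<Sum>v\<in>UNIV. \<Sum>I\<in>{I\<in>W. (holds (val I) \<kappa> \<and> good I) \<and> val I = v}. p I)"
    proof (rule sum_mono)
      fix v
      show "f False v \<le> (\<Sum>I\<in>{I\<in>W. (holds (val I) \<kappa> \<and> good I) \<and> val I = v}. p I)"
      proof (cases "v \<in> Sp \<and> holds v \<kappa> \<and> good (pk False v)")
        case True
        have "{I\<in>W. (holds (val I) \<kappa> \<and> good I) \<and> val I = v} = {I\<in>W. val I = v}"
        proof safe
          fix I assume I: "I \<in> W" "v = val I"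
          show "holds (val I) \<kappa>" using True I by simp
          show "good I"
          proof (rule ccontr)
            assume "\<not> good I"
            then have "(ext (pk False v) C \<subseteq> ext (pk False v) D) = False"
              unfolding pk_def using pick_good[of I "cd v" C D False] pm I good_def by auto
            then show False using True good_def by simp
          qed
        qed
        then show ?thesis using True pm unfolding f_def by simp
      next
        case False
        then show ?thesis unfolding f_def using pm by (auto intro: sum_nonneg)
      qed
    qed
    then show ?thesis unfolding PrMb pm[THEN conjunct1] using Den0 by (rule divide_right_mono)
  qed
  show "Pr M C D \<kappa> \<le> Pr (Mb True) C D \<kappa>" if "M \<in> ME_models R T"
  proof -
    obtain W p where Me: "M = (W, p)" by (cases M)
    note pm = PrM[OF Me that]
    have "(\<Sum>v\<in>UNIV. \<Sum>I\<in>{I\<in>W. (holds (val I) \<kappa> \<and> good I) \<and> val I = v}. p I) \<le> (\<Sum>v\<in>UNIV. f True v)"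
    proof (rule sum_mono)
      fix v
      have le: "(\<Sum>I\<in>{I\<in>W. (holds (val I) \<kappa> \<and> good I) \<and> val I = v}. p I) \<le> P v"
        unfolding pm[THEN conjunct2, THEN conjunct2, THEN conjunct2, THEN conjunct2, rule_format, of v]
        by (rule sum_mono2) (use pm in auto)
      show "(\<Sum>I\<in>{I\<in>W. (holds (val I) \<kappa> \<and> good I) \<and> val I = v}. p I) \<le> f True v"
      proof (cases "v \<in> Sp \<and> holds v \<kappa> \<and> good (pk True v)")
        case True
        then show ?thesis using le unfolding f_def by simp
      next
        case False
        have f0: "f True v \<ge> 0" unfolding f_def using P0 by simp
        show ?thesis
        proof (cases "v \<in> Sp")
          case False
          then have "P v = 0" using P0[of v] unfolding Sp_def by simp
          then show ?thesis using le f0 by simp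
        next
          case inSp: True
          have "{I\<in>W. (holds (val I) \<kappa> \<and> good I) \<and> val I = v} = {}"
          proof -
            have False if I: "I \<in> W" "holds (val I) \<kappa>" "good I" "val I = v" for I
            proof -
              have "(ext (pk True v) C \<subseteq> ext (pk True v) D) = True"
                unfolding pk_def using pick_good[of I "cd v" C D True] pm I good_def by auto
              then show False using False inSp I good_def by simp
            qed
            then show ?thesis by blast
          qed
          then show ?thesis using f0 by (simp only: sum.empty)
        qed
      qed
    qed
    then show ?thesis unfolding PrMb pm[THEN conjunct1] using Den0 by (rule divide_right_mono)
  qed
qed

theorem corollary1:
  fixes R :: "'v::finite constraint set"
    and T :: "('c, 'r, 'v) gci set"
    and C D :: "('c, 'r) concept"
    and \<kappa> :: "'v form"
  assumes "finite R" and "finite T"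
    and "ME_consistent R T TYPE('d)"
  shows "\<exists>P\<in>(ME_models R T :: ('c, 'r, 'd, 'v) alcp set).
           \<exists>Q\<in>(ME_models R T :: ('c, 'r, 'd, 'v) alcp set).
             sceptical R T TYPE('d) C D \<kappa> = Pr P C D \<kappa> \<and>
             credulous R T TYPE('d) C D \<kappa> = Pr Q C D \<kappa>"
proof -
  obtain M0 where M0: "M0 \<in> (ME_models R T :: ('c, 'r, 'd, 'v) alcp set)"
    using assms(3) unfolding ME_consistent_def by blast
  note e = extreme[OF M0, where C=C and D=D]
  define Mlo where "Mlo = ((\<lambda>v. pick {I::('c,'r,'d,'v) world. wf_world I \<and> (\<forall>g\<in>T. world_models_gci I g) \<and> val I = v} C D False) ` {v. ME_dist R v > 0}, \<lambda>I::('c,'r,'d,'v) world. ME_dist R (val I))"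
  define Mhi where "Mhi = ((\<lambda>v. pick {I::('c,'r,'d,'v) world. wf_world I \<and> (\<forall>g\<in>T. world_models_gci I g) \<and> val I = v} C D True) ` {v. ME_dist R v > 0}, \<lambda>I::('c,'r,'d,'v) world. ME_dist R (val I))"
  have lo: "Mlo \<in> ME_models R T" "\<And>M::('c,'r,'d,'v) alcp. M \<in> ME_models R T \<Longrightarrow> Pr Mlo C D \<kappa> \<le> Pr M C D \<kappa>"
    using e(1)[of False] e(2) unfolding Mlo_def by blast+
  have hi: "Mhi \<in> ME_models R T" "\<And>M::('c,'r,'d,'v) alcp. M \<in> ME_models R T \<Longrightarrow> Pr M C D \<kappa> \<le> Pr Mhi C D \<kappa>"
    using e(1)[of True] e(3) unfolding Mhi_def by blast+
  have s: "sceptical R T TYPE('d) C D \<kappa> = Pr Mlo C D \<kappa>"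
    unfolding sceptical_def by (rule cInf_eq_minimum) (use lo in auto)
  have c: "credulous R T TYPE('d) C D \<kappa> = Pr Mhi C D \<kappa>"
    unfolding credulous_def by (rule cSup_eq_maximum) (use hi in auto)
  show ?thesis using s c lo(1) hi(1) by blast
qed

end
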